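(* Let $\mathcal G=(N,T,I,P,S)$ be an indexed grammar with $S\in\mathrm{Useful}$, and let $\overline{\mathcal G}$ be its annotated version. Then $L(\overline{\mathcal G})=L(\mathcal G)$, and $\overline{\mathcal G}$ is productive: for every sentential form $u$ of $\overline{\mathcal G}$ with $(S,\mathrm{Useful})\Rightarrow^*_{\overline{\mathcal G}}u$ there exists $w\in T^*$ with $u\Rightarrow^*_{\overline{\mathcal G}}w$.
   Context: An indexed grammar is a tuple $\mathcal{G}=(N,T,I,P,S)$ where $N$ (non-terminals), $T$ (terminals) and $I$ (index or stack symbols) are finite pairwise disjoint alphabets, $S\in N$, and $P$ is a finite set of productions, each of one of the forms $A\to w$ ($A\in N$, $w\in T^*$), $A\to BC$ ($A,B,C\in N$), $A\to Bf$ ($A,B\in N$, $f\in I$), $Af\to B$ ($A,B\in N$, $f\in I$). A term is written $A[z]$ with $A\in N$ and $z\in I^*$ (the stack, leftmost symbol on top; $A$ alone means $A[\varepsilon]$); a sentential form is a finite word whose letters are terms or terminals. The one-step derivation relation $\Rightarrow_{\mathcal G}$ is: for sentential forms $u,v$, $uA[z]v\Rightarrow uB[z]C[z]v$ if $A\to BC\in P$; $uA[z]v\Rightarrow uB[fz]v$ if $A\to Bf\in P$; $uA[fz]v\Rightarrow uB[z]v$ if $Af\to B\in P$; $uA[z]v\Rightarrow uwv$ if $A\to w\in P$ with $w\in T^*$. $\Rightarrow^*_{\mathcal G}$ is its reflexive transitive closure and $L(\mathcal G)=\{w\in T^*: S\Rightarrow^*_{\mathcal G} w\}$. For $X\subseteq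 N$ and $z\in I^*$, $z\cdot X=\{A\in N:\exists u\in(X\cup T)^*,\ A[z]\Rightarrow^*_{\mathcal G}u\}$, where a word of $(X\cup T)^*$ is regarded as a sentential form in which every non-terminal has empty stack. $\mathrm{Useful}=\{A\in N:\exists w\in T^*,\ A\Rightarrow^*_{\mathcal G}w\}$. Assuming $S\in\mathrm{Useful}$, the annotated version of $\mathcal G$ is the indexed grammar $\overline{\mathcal G}=(\overline N,T,\overline I,\overline P,\overline S)$ with $\overline N=\{(A,X)\in N\times 2^N: A\in X\}$, $\overline I=I\times 2^N$, $\overline S=(S,\mathrm{Useful})$, and $\overline P$ consisting exactly of: $(A,X)\to w$ for every $A\to w\in P$ ($w\in T^*$) and every $X$ with $A\in X$; $(A,X)\to(B,X)(C,X)$ for every $A\to BC\in P$ and every $X$ with $A,B,C\in X$; $(A,X)\to(B,Y)(f,X)$ for every $A\to Bf\in P$ and every $X$, where $Y=f\cdot X$, $A\in X$ and $B\in Y$; $(A,Y)(f,X)\to(B,X)$ for every $Af\to B\in P$ and every $X$, where $Y=f\cdot X$, $A\in Y$ and $B\in X$. *)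

theory Defs
  imports Main
begin

datatype ('n, 't, 'i) iprod =
    TermProd 'n "'t list"
  | BinProd 'n 'n 'n
  | PushProd 'n 'n 'i         (* A \<rightarrow> B f *)
  | PopProd 'n 'i 'n          (* A f \<rightarrow> B *)

record ('n, 't, 'i) igrammar =
  nts :: "'n set"
  tms :: "'t set"
  idx :: "'i set"
  prods :: "('n, 't, 'i) iprod set"
  start :: 'n

text \<open>Letters of sentential forms: terms A[z] (stack z, leftmost on top) or terminals.\<close>
datatype ('n, 't, 'i) sym = NT 'n "'i list" | Tm 't

definition wf_igrammar :: "('n, 't, 'i) igrammar \<Rightarrow> bool" where
  "wf_igrammar G \<longleftrightarrow> finite (nts G) \<and> finite (tms G) \<and> finite (idx G) \<and>
     finite (prods G) \<and> start G \<in> nts G \<and>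
     (\<forall>p \<in> prods G. case p of
        TermProd A w \<Rightarrow> A \<in> nts G \<and> set w \<subseteq> tms G
      | BinProd A B C \<Rightarrow> A \<in> nts G \<and> B \<in> nts G \<and> C \<in> nts G
      | PushProd A B f \<Rightarrow> A \<in> nts G \<and> B \<in> nts G \<and> f \<in> idx G
      | PopProd A f B \<Rightarrow> A \<in> nts G \<and> f \<in> idx G \<and> B \<in> nts G)"

definition step :: "('n, 't, 'i) igrammar \<Rightarrow> ('n, 't, 'i) sym list \<Rightarrow> ('n, 't, 'i) sym list \<Rightarrow> bool" where
  "step G u v \<longleftrightarrow> (\<exists>u1 u2 A z. u = u1 @ [NT A z] @ u2 \<and>
     ((\<exists>B C. BinProd A B C \<in> prods G \<and> v = u1 @ [NT B z, NT C z] @ u2) \<or>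
      (\<exists>B f. PushProd A B f \<in> prods G \<and> v = u1 @ [NT B (f # z)] @ u2) \<or>
      (\<exists>B f z'. z = f # z' \<and> PopProd A f B \<in> prods G \<and> v = u1 @ [NT B z'] @ u2) \<or>
      (\<exists>w. TermProd A w \<in> prods G \<and> v = u1 @ map Tm w @ u2)))"

definition derives :: "('n, 't, 'i) igrammar \<Rightarrow> ('n, 't, 'i) sym list \<Rightarrow> ('n, 't, 'i) sym list \<Rightarrow> bool" where
  "derives G = (step G)\<^sup>*\<^sup>*"

definition lang :: "('n, 't, 'i) igrammar \<Rightarrow> 't list set" where
  "lang G = {w. set w \<subseteq> tms G \<and> derives G [NT (start G) []] (map Tm w)}"

definition dot :: "('n, 't, 'i) igrammar \<Rightarrow> 'i list \<Rightarrow> 'n set \<Rightarrow> 'n set" where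
  "dot G z X = {A \<in> nts G. \<exists>u. set u \<subseteq> {NT B [] | B. B \<in> X} \<union> {Tm t | t. t \<in> tms G} \<and>
                                derives G [NT A z] u}"

definition Useful :: "('n, 't, 'i) igrammar \<Rightarrow> 'n set" where
  "Useful G = {A \<in> nts G. \<exists>w. set w \<subseteq> tms G \<and> derives G [NT A []] (map Tm w)}"

definition annotate :: "('n, 't, 'i) igrammar \<Rightarrow> ('n \<times> 'n set, 't, 'i \<times> 'n set) igrammar" where
  "annotate G = \<lparr> nts = {(A, X). X \<subseteq> nts G \<and> A \<in> X},
     tms = tms G,
     idx = idx G \<times> Pow (nts G),
     prods =
       {TermProd (A, X) w | A w X. TermProd A w \<in> prods G \<and> X \<subseteq> nts G \<and> A \<in> X}
     \<union> {BinProd (A, X) (B, X) (C, X) | A B C X. BinProd A B C \<in> prods G \<and> X \<subseteq> nts G \<and>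
           A \<in> X \<and> B \<in> X \<and> C \<in> X}
     \<union> {PushProd (A, X) (B, dot G [f] X) (f, X) | A B f X. PushProd A B f \<in> prods G \<and>
           X \<subseteq> nts G \<and> A \<in> X \<and> B \<in> dot G [f] X}
     \<union> {PopProd (A, dot G [f] X) (f, X) (B, X) | A f B X. PopProd A f B \<in> prods G \<and>
           X \<subseteq> nts G \<and> A \<in> dot G [f] X \<and> B \<in> X},
     start = (start G, Useful G) \<rparr>"

end

theory Submission
  imports Defs
begin

definition rule :: "('n,'t,'i) igrammar \<Rightarrow> ('n,'t,'i) sym \<Rightarrow> ('n,'t,'i) sym list \<Rightarrow> bool" where
 "rule G a r \<longleftrightarrow> (\<exists>A z. a = NT A z \<and>
     ((\<exists>B C. BinProd A B C \<in> prods G \<and> r = [NT B z, NT C z]) \<or>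
      (\<exists>B f. PushProd A B f \<in> prods G \<and> r = [NT B (f # z)]) \<or>
      (\<exists>B f z'. z = f # z' \<and> PopProd A f B \<in> prods G \<and> r = [NT B z']) \<or>
      (\<exists>w. TermProd A w \<in> prods G \<and> r = map Tm w)))"

lemma step_rule: "step G u v \<longleftrightarrow> (\<exists>u1 u2 a r. u = u1 @ [a] @ u2 \<and> v = u1 @ r @ u2 \<and> rule G a r)"
  unfolding step_def rule_def by fastforce

lemma rule_step: "rule G a r \<Longrightarrow> step G [a] r"
  unfolding step_rule by (metis append.left_neutral append.right_neutral)

lemma step_appL: "step G u v \<Longrightarrow> step G (l @ u) (l @ v)"
  unfolding step_rule by (metis append.assoc)

lemma step_appR: "step G u v \<Longrightarrow> step G (u @ l) (v @ l)"
  unfolding step_rule by (metis append.assoc)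

lemma step_split:
  assumes "step G (u1 @ u2) v"
  shows "(\<exists>v1. step G u1 v1 \<and> v = v1 @ u2) \<or> (\<exists>v2. step G u2 v2 \<and> v = u1 @ v2)"
proof -
  obtain p1 p2 a r where h: "u1 @ u2 = p1 @ ([a] @ p2)" "v = p1 @ r @ p2" "rule G a r"
    using assms unfolding step_rule by blast
  have "\<exists>us. (u1 = p1 @ us \<and> us @ u2 = [a] @ p2) \<or> (u1 @ us = p1 \<and> u2 = us @ ([a] @ p2))"
    using h(1) unfolding append_eq_append_conv2 .
  then obtain us where "(u1 = p1 @ us \<and> us @ u2 = [a] @ p2) \<or> (u1 @ us = p1 \<and> u2 = us @ ([a] @ p2))"
    by blast
  then show ?thesis
  proof
    assume c: "u1 = p1 @ us \<and> us @ u2 = [a] @ p2"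
    show ?thesis
    proof (cases us)
      case Nil
      then have "u2 = [] @ [a] @ p2" "v = u1 @ (([] @ r @ p2))" using c h by auto
      then have "step G u2 ([] @ r @ p2)" "v = u1 @ ([] @ r @ p2)"
        using h(3) unfolding step_rule by blast+
      then show ?thesis by blast
    next
      case (Cons b us')
      then have "b = a" "p2 = us' @ u2" using c by auto
      then have "u1 = p1 @ [a] @ us'" "v = (p1 @ r @ us') @ u2" using c h Cons by auto
      then have "step G u1 (p1 @ r @ us')" "v = (p1 @ r @ us') @ u2"
        using h(3) unfolding step_rule by blast+
      then show ?thesis by blast
    qed
  next
    assume c: "u1 @ us = p1 \<and> u2 = us @ ([a] @ p2)"
    then have "v = u1 @ (us @ r @ p2)" using h by auto
    moreover have "step G u2 (us @ r @ p2)" using c h(3) unfolding step_rule by blast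
    ultimately show ?thesis by blast
  qed
qed

lemma pow_split: "(step G ^^ n) (u1 @ u2) v \<Longrightarrow>
  \<exists>v1 v2 n1 n2. v = v1 @ v2 \<and> n = n1 + n2 \<and> (step G ^^ n1) u1 v1 \<and> (step G ^^ n2) u2 v2"
proof (induction n arbitrary: u1 u2)
  case 0 then show ?case by auto
next
  case (Suc n)
  then obtain y where y: "step G (u1@u2) y" "(step G ^^ n) y v" using relpowp_Suc_D2 by metis
  from step_split[OF y(1)] show ?case
  proof
    assume "\<exists>v1. step G u1 v1 \<and> y = v1 @ u2"
    then obtain v1 where a: "step G u1 v1" "y = v1 @ u2" by blast
    from Suc.IH[of v1 u2] y(2) a obtain x1 x2 n1 n2 where b: "v = x1@x2" "n = n1+n2"
      "(step G ^^ n1) v1 x1" "(step G ^^ n2) u2 x2" by auto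
    have "(step G ^^ Suc n1) u1 x1" using a(1) b(3) relpowp_Suc_I2 by metis
    then show ?case using b by (intro exI[of _ x1] exI[of _ x2] exI[of _ "Suc n1"] exI[of _ n2]) auto
  next
    assume "\<exists>v2. step G u2 v2 \<and> y = u1 @ v2"
    then obtain v2 where a: "step G u2 v2" "y = u1 @ v2" by blast
    from Suc.IH[of u1 v2] y(2) a obtain x1 x2 n1 n2 where b: "v = x1@x2" "n = n1+n2"
      "(step G ^^ n1) u1 x1" "(step G ^^ n2) v2 x2" by auto
    have "(step G ^^ Suc n2) u2 x2" using a(1) b(4) relpowp_Suc_I2 by metis
    then show ?case using b by (intro exI[of _ x1] exI[of _ x2] exI[of _ n1] exI[of _ "Suc n2"]) auto
  qed
qed

lemma derives_app: "derives G u1 v1 \<Longrightarrow> derives G u2 v2 \<Longrightarrow> derives G (u1@u2) (v1@v2)"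
proof -
  assume a: "derives G u1 v1" "derives G u2 v2"
  have "(step G)\<^sup>*\<^sup>* (u1@u2) (v1@u2)" using a(1) unfolding derives_def
    by (induction rule: rtranclp_induct) (auto intro: rtranclp.rtrancl_into_rtrancl step_appR)
  moreover have "(step G)\<^sup>*\<^sup>* (v1@u2) (v1@v2)" using a(2) unfolding derives_def
    by (induction rule: rtranclp_induct) (auto intro: rtranclp.rtrancl_into_rtrancl step_appL)
  ultimately show ?thesis unfolding derives_def by auto
qed

lemma derives_concat: "(\<forall>a\<in>set u. \<exists>w. set w \<subseteq> S \<and> derives G [a] (map Tm w)) \<Longrightarrow>
   \<exists>w. set w \<subseteq> S \<and> derives G u (map Tm w)"
proof (induction u)
  case Nil then show ?case by (auto simp: derives_def intro: exI[of _ "[]"])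
next
  case (Cons a u)
  then obtain w1 w2 where "set w1 \<subseteq> S" "derives G [a] (map Tm w1)" "set w2 \<subseteq> S" "derives G u (map Tm w2)"
    by auto
  then show ?case using derives_app[of G "[a]" "map Tm w1" u "map Tm w2"]
    by (intro exI[of _ "w1@w2"]) auto
qed

definition appsym :: "'i list \<Rightarrow> ('n,'t,'i) sym \<Rightarrow> ('n,'t,'i) sym" where
  "appsym z a = (case a of NT C x \<Rightarrow> NT C (x@z) | Tm t \<Rightarrow> Tm t)"

lemma rule_app: "rule G a r \<Longrightarrow> rule G (appsym z a) (map (appsym z) r)"
  unfolding rule_def appsym_def by (auto simp: comp_def)

lemma step_lift: "step G u v \<Longrightarrow> step G (map (appsym z) u) (map (appsym z) v)"
proof -
  assume "step G u v"
  then obtain u1 u2 a r where h: "u = u1 @ [a] @ u2" "v = u1 @ r @ u2" "rule G a r"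
    unfolding step_rule by blast
  have "map (appsym z) u = map (appsym z) u1 @ [appsym z a] @ map (appsym z) u2"
    "map (appsym z) v = map (appsym z) u1 @ map (appsym z) r @ map (appsym z) u2"
    using h by auto
  moreover have "rule G (appsym z a) (map (appsym z) r)" using h(3) by (rule rule_app)
  ultimately show ?thesis unfolding step_rule by blast
qed

lemma derives_lift: "derives G u v \<Longrightarrow> derives G (map (appsym z) u) (map (appsym z) v)"
  unfolding derives_def
  by (induction rule: rtranclp_induct) (auto intro: rtranclp.rtrancl_into_rtrancl step_lift)

lemma wf_prods: "wf_igrammar G \<Longrightarrow> p \<in> prods G \<Longrightarrow> (case p of
        TermProd A w \<Rightarrow> A \<in> nts G \<and> set w \<subseteq> tms G
      | BinProd A B C \<Rightarrow> A \<in> nts G \<and> B \<in> nts G \<and> C \<in> nts G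
      | PushProd A B f \<Rightarrow> A \<in> nts G \<and> B \<in> nts G \<and> f \<in> idx G
      | PopProd A f B \<Rightarrow> A \<in> nts G \<and> f \<in> idx G \<and> B \<in> nts G)"
  unfolding wf_igrammar_def by blast

lemma rule_nts: "wf_igrammar G \<Longrightarrow> rule G (NT A z) r \<Longrightarrow> A \<in> nts G"
  unfolding rule_def by (auto dest: wf_prods[of G])

lemma first_step: "(step G ^^ Suc n) [a] v \<Longrightarrow> \<exists>r. rule G a r \<and> (step G ^^ n) r v"
proof -
  assume "(step G ^^ Suc n) [a] v"
  then obtain y where y: "step G [a] y" "(step G ^^ n) y v" using relpowp_Suc_D2 by metis
  then obtain u1 u2 b r where "[a] = u1 @ [b] @ u2" "y = u1 @ r @ u2" "rule G b r"
    unfolding step_rule by blast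
  then show ?thesis using y(2) by (cases u1) auto
qed

lemma no_pow0: "(step G ^^ 0) [NT A y] (map Tm w) \<Longrightarrow> False"
  by (cases w) auto

definition Lset :: "('n, 't, 'i) igrammar \<Rightarrow> 'i list \<Rightarrow> 'n set" where
  "Lset G y = {B \<in> nts G. \<exists>w. set w \<subseteq> tms G \<and> derives G [NT B y] (map Tm w)}"

lemma pow_L: "wf_igrammar G \<Longrightarrow> (step G ^^ n) [NT B y] (map Tm w) \<Longrightarrow> set w \<subseteq> tms G \<Longrightarrow> B \<in> Lset G y"
proof -
  assume a: "wf_igrammar G" "(step G ^^ n) [NT B y] (map Tm w)" "set w \<subseteq> tms G"
  then obtain m where n: "n = Suc m" by (cases n) (auto dest: no_pow0)
  then obtain r where "rule G (NT B y) r" using first_step a(2) by metis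
  then have "B \<in> nts G" using rule_nts a(1) by metis
  moreover have "derives G [NT B y] (map Tm w)" using a(2) unfolding derives_def
    by (metis relpowp_imp_rtranclp)
  ultimately show ?thesis using a(3) unfolding Lset_def by auto
qed

lemma derives_step: "step G u v \<Longrightarrow> derives G v w \<Longrightarrow> derives G u w"
  unfolding derives_def by (rule converse_rtranclp_into_rtranclp)

lemma hard:
  assumes wf: "wf_igrammar G"
  shows "(step G ^^ n) [NT B (x @ y)] (map Tm w) \<Longrightarrow> set w \<subseteq> tms G \<Longrightarrow>
    \<exists>u. derives G [NT B x] u \<and> set u \<subseteq> {NT C [] | C. C \<in> Lset G y} \<union> {Tm t | t. t \<in> tms G}"
proof (induction n arbitrary: B x w rule: less_induct)
  case (less n)
  show ?case
  proof (cases x)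
    case Nil
    then have "B \<in> Lset G y" using pow_L wf less.prems by fastforce
    then show ?thesis using Nil by (intro exI[of _ "[NT B []]"]) (auto simp: derives_def)
  next
    case (Cons g x')
    from less.prems(1) obtain m where n: "n = Suc m" by (cases n) (auto dest: no_pow0)
    then obtain r where r: "rule G (NT B (x@y)) r" "(step G ^^ m) r (map Tm w)"
      using first_step less.prems by metis
    from r(1) consider (bin) C D where "BinProd B C D \<in> prods G" "r = [NT C (x@y), NT D (x@y)]"
      | (push) C f where "PushProd B C f \<in> prods G" "r = [NT C (f # x@y)]"
      | (pop) C f z' where "x @ y = f # z'" "PopProd B f C \<in> prods G" "r = [NT C z']"
      | (tmc) w' where "TermProd B w' \<in> prods G" "r = map Tm w'"
      unfolding rule_def by blast
    then show ?thesis
    proof cases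
      case bin
      have "(step G ^^ m) ([NT C (x@y)] @ [NT D (x@y)]) (map Tm w)" using r(2) bin by simp
      from pow_split[OF this] obtain v1 v2 n1 n2 where
        s: "map Tm w = v1 @ v2" "m = n1+n2" "(step G ^^ n1) [NT C (x@y)] v1" "(step G ^^ n2) [NT D (x@y)] v2"
        by blast
      from s(1) obtain w1 w2 where ww: "w = w1@w2" "v1 = map Tm w1" "v2 = map Tm w2"
        by (metis map_eq_append_conv)
      from less.IH[of n1 C x w1] s ww less.prems n obtain u1 where
        u1: "derives G [NT C x] u1" "set u1 \<subseteq> {NT C [] | C. C \<in> Lset G y} \<union> {Tm t | t. t \<in> tms G}"
        by auto
      from less.IH[of n2 D x w2] s ww less.prems n obtain u2 where
        u2: "derives G [NT D x] u2" "set u2 \<subseteq> {NT C [] | C. C \<in> Lset G y} \<union> {Tm t | t. t \<in> tms G}"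
        by auto
      have "rule G (NT B x) ([NT C x] @ [NT D x])" using bin(1) unfolding rule_def by auto
      then have "step G [NT B x] ([NT C x] @ [NT D x])" by (rule rule_step)
      moreover have "derives G ([NT C x] @ [NT D x]) (u1 @ u2)" using u1 u2 derives_app by metis
      ultimately have "derives G [NT B x] (u1 @ u2)" by (rule derives_step)
      then show ?thesis using u1 u2 by (intro exI[of _ "u1@u2"]) auto
    next
      case push
      from less.IH[of m C "f#x" w] push r less.prems n obtain u where
        u: "derives G [NT C (f#x)] u" "set u \<subseteq> {NT C [] | C. C \<in> Lset G y} \<union> {Tm t | t. t \<in> tms G}"
        by auto
      have "rule G (NT B x) [NT C (f#x)]" using push(1) unfolding rule_def by auto
      then have "step G [NT B x] [NT C (f#x)]" by (rule rule_step)
      then show ?thesis using u derives_step by blast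
    next
      case pop
      then have fz: "f = g" "z' = x' @ y" using Cons by auto
      from less.IH[of m C x' w] pop fz r less.prems n obtain u where
        u: "derives G [NT C x'] u" "set u \<subseteq> {NT C [] | C. C \<in> Lset G y} \<union> {Tm t | t. t \<in> tms G}"
        by auto
      have "rule G (NT B x) [NT C x']" using pop(2) fz Cons unfolding rule_def by auto
      then have "step G [NT B x] [NT C x']" by (rule rule_step)
      then show ?thesis using u derives_step by blast
    next
      case tmc
      have "set w' \<subseteq> tms G" using wf_prods[OF wf tmc(1)] by simp
      moreover have "rule G (NT B x) (map Tm w')" using tmc(1) unfolding rule_def by auto
      then have "step G [NT B x] (map Tm w')" by (rule rule_step)
      ultimately show ?thesis unfolding derives_def
        by (intro exI[of _ "map Tm w'"]) auto
    qed
  qed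
qed

lemma L_dot:
  assumes wf: "wf_igrammar G"
  shows "Lset G (g # y) = dot G [g] (Lset G y)"
proof
  show "Lset G (g # y) \<subseteq> dot G [g] (Lset G y)"
  proof
    fix B assume "B \<in> Lset G (g # y)"
    then obtain w where w: "B \<in> nts G" "set w \<subseteq> tms G" "derives G [NT B (g#y)] (map Tm w)"
      unfolding Lset_def by auto
    then obtain n where "(step G ^^ n) [NT B ([g] @ y)] (map Tm w)"
      unfolding derives_def rtranclp_power by auto
    from hard[OF wf this w(2)] obtain u where
      "derives G [NT B [g]] u" "set u \<subseteq> {NT C [] | C. C \<in> Lset G y} \<union> {Tm t | t. t \<in> tms G}"
      by blast
    with w(1) show "B \<in> dot G [g] (Lset G y)"
      unfolding dot_def by blast
  qed
next
  show "dot G [g] (Lset G y) \<subseteq> Lset G (g # y)"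
  proof
    fix A assume "A \<in> dot G [g] (Lset G y)"
    then obtain u where u: "A \<in> nts G" "set u \<subseteq> {NT B [] | B. B \<in> Lset G y} \<union> {Tm t | t. t \<in> tms G}"
      "derives G [NT A [g]] u"
      unfolding dot_def by auto
    have d: "derives G [NT A (g#y)] (map (appsym y) u)"
      using derives_lift[OF u(3), of y] by (simp add: appsym_def)
    have "\<forall>a\<in>set (map (appsym y) u). \<exists>w. set w \<subseteq> tms G \<and> derives G [a] (map Tm w)"
    proof
      fix a assume "a \<in> set (map (appsym y) u)"
      then obtain b where b: "b \<in> set u" "a = appsym y b" by auto
      then consider (n) B where "b = NT B []" "B \<in> Lset G y" | (t) t where "b = Tm t" "t \<in> tms G"
        using u(2) by blast
      then show "\<exists>w. set w \<subseteq> tms G \<and> derives G [a] (map Tm w)"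
      proof cases
        case n then show ?thesis using b unfolding Lset_def appsym_def by auto
      next
        case t then show ?thesis using b unfolding appsym_def derives_def
          by (intro exI[of _ "[t]"]) auto
      qed
    qed
    from derives_concat[OF this] obtain w where "set w \<subseteq> tms G" "derives G (map (appsym y) u) (map Tm w)"
      by blast
    moreover have "derives G [NT A (g#y)] (map Tm w)"
      using d calculation(2) unfolding derives_def by (rule rtranclp_trans)
    ultimately show "A \<in> Lset G (g # y)" using u(1) unfolding Lset_def by blast
  qed
qed

lemma Lset_sub: "Lset G y \<subseteq> nts G"
  unfolding Lset_def by auto

primrec annst :: "('n, 't, 'i) igrammar \<Rightarrow> 'i list \<Rightarrow> ('i \<times> 'n set) list" where
  "annst G [] = []"
| "annst G (g # y) = (g, Lset G y) # annst G y"

definition good :: "('n, 't, 'i) igrammar \<Rightarrow> ('n \<times> 'n set, 't, 'i \<times> 'n set) sym \<Rightarrow> bool" where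
  "good G a \<longleftrightarrow> (\<exists>A y. a = NT (A, Lset G y) (annst G y) \<and> A \<in> Lset G y) \<or> (\<exists>t. a = Tm t \<and> t \<in> tms G)"

lemma good_pres:
  assumes wf: "wf_igrammar G" and ru: "rule (annotate G) a r" and ga: "good G a" and br: "b \<in> set r"
  shows "good G b"
proof -
  define c where "c = (\<lambda>P zs. (\<exists>Q R. BinProd P Q R \<in> prods (annotate G) \<and> r = [NT Q zs, NT R zs]) \<or>
     (\<exists>Q f. PushProd P Q f \<in> prods (annotate G) \<and> r = [NT Q (f # zs)]) \<or>
     (\<exists>Q f zs'. zs = f # zs' \<and> PopProd P f Q \<in> prods (annotate G) \<and> r = [NT Q zs']) \<or>
     (\<exists>w. TermProd P w \<in> prods (annotate G) \<and> r = map Tm w))"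
  have "\<exists>P zs. a = NT P zs \<and> c P zs" using ru unfolding rule_def c_def .
  then obtain P zs where a: "a = NT P zs" and c0: "c P zs" by blast
  have c: "(\<exists>Q R. BinProd P Q R \<in> prods (annotate G) \<and> r = [NT Q zs, NT R zs]) \<or>
     (\<exists>Q f. PushProd P Q f \<in> prods (annotate G) \<and> r = [NT Q (f # zs)]) \<or>
     (\<exists>Q f zs'. zs = f # zs' \<and> PopProd P f Q \<in> prods (annotate G) \<and> r = [NT Q zs']) \<or>
     (\<exists>w. TermProd P w \<in> prods (annotate G) \<and> r = map Tm w)"
    using c0 unfolding c_def .
  from ga a obtain A y where ay: "P = (A, Lset G y)" "zs = annst G y" "A \<in> Lset G y"
    unfolding good_def by auto
  from c show ?thesis
  proof (elim disjE exE conjE)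
    fix Q R assume h: "BinProd P Q R \<in> prods (annotate G)" "r = [NT Q zs, NT R zs]"
    then obtain B C where "Q = (B, Lset G y)" "R = (C, Lset G y)" "B \<in> Lset G y" "C \<in> Lset G y"
      using ay unfolding annotate_def by auto
    then show ?thesis using br h(2) ay unfolding good_def by auto
  next
    fix Q f assume h: "PushProd P Q f \<in> prods (annotate G)" "r = [NT Q (f # zs)]"
    then obtain B g where bg: "Q = (B, dot G [g] (Lset G y))" "f = (g, Lset G y)" "B \<in> dot G [g] (Lset G y)"
      using ay unfolding annotate_def by auto
    then have "Q = (B, Lset G (g # y))" "f # zs = annst G (g # y)" "B \<in> Lset G (g # y)"
      using L_dot[OF wf] ay by auto
    then have "b = NT (B, Lset G (g # y)) (annst G (g # y))" using br h(2) by simp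
    then show ?thesis using \<open>B \<in> Lset G (g # y)\<close> unfolding good_def by blast
  next
    fix Q f zs' assume h: "zs = f # zs'" "PopProd P f Q \<in> prods (annotate G)" "r = [NT Q zs']"
    then obtain B g X where bg: "f = (g, X)" "Q = (B, X)" "B \<in> X"
      using ay unfolding annotate_def by auto
    from h(1) ay(2) obtain g' y' where y: "y = g' # y'" by (cases y) auto
    then have "f = (g', Lset G y')" "zs' = annst G y'" using h(1) ay(2) by auto
    then have "Q = (B, Lset G y')" "B \<in> Lset G y'" using bg by auto
    then have "b = NT (B, Lset G y') (annst G y')" using br h(3) \<open>zs' = annst G y'\<close> by simp
    then show ?thesis using \<open>B \<in> Lset G y'\<close> unfolding good_def by blast
  next
    fix w assume h: "TermProd P w \<in> prods (annotate G)" "r = map Tm w"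
    then have "TermProd A w \<in> prods G" using ay unfolding annotate_def by auto
    then have "set w \<subseteq> tms G" using wf_prods[OF wf] by fastforce
    then show ?thesis using br h(2) unfolding good_def by auto
  qed
qed

lemma good_derives:
  assumes wf: "wf_igrammar G"
    and d: "derives (annotate G) u v" and g0: "\<forall>a\<in>set u. good G a"
  shows "\<forall>a\<in>set v. good G a"
  using d[unfolded derives_def]
proof (induction rule: rtranclp_induct)
  case base then show ?case using g0 .
next
  case (step v v')
  have gv: "\<forall>a\<in>set v. good G a" by (rule step.IH)
  from step.hyps(2) obtain u1 u2 a r where h: "v = u1 @ [a] @ u2" "v' = u1 @ r @ u2" "rule (annotate G) a r"
    unfolding step_rule by blast
  have "good G a" using gv h(1) by simp
  then have "\<forall>b\<in>set r. good G b" using good_pres[OF wf h(3)] by blast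
  then show ?case using gv h(1,2) by auto
qed

lemma step_NT: assumes "step G u v" shows "\<exists>A z. NT A z \<in> set u"
proof -
  from assms obtain u1 u2 A z where "u = u1 @ [NT A z] @ u2" unfolding step_def by blast
  then show ?thesis by auto
qed

lemma term_pow:
  assumes "(step G ^^ m) (map Tm w') v" shows "v = map Tm w'"
proof (cases m)
  case 0 then show ?thesis using assms by simp
next
  case (Suc k)
  then obtain y where "step G (map Tm w') y" using assms relpowp_Suc_D2 by metis
  then show ?thesis using step_NT by fastforce
qed

lemma lift:
  assumes wf: "wf_igrammar G"
  shows "(step G ^^ n) [NT A y] (map Tm w) \<Longrightarrow> set w \<subseteq> tms G \<Longrightarrow>
    derives (annotate G) [NT (A, Lset G y) (annst G y)] (map Tm w)"
proof (induction n arbitrary: A y w rule: less_induct)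
  case (less n)
  have AL: "A \<in> Lset G y" using pow_L[OF wf less.prems(1,2)] .
  from less.prems(1) obtain m where n: "n = Suc m" by (cases n) (auto dest: no_pow0)
  then obtain r where r: "rule G (NT A y) r" "(step G ^^ m) r (map Tm w)"
    using first_step less.prems by metis
  from r(1) consider (bin) B C where "BinProd A B C \<in> prods G" "r = [NT B y, NT C y]"
    | (push) B f where "PushProd A B f \<in> prods G" "r = [NT B (f # y)]"
    | (pop) B f y' where "y = f # y'" "PopProd A f B \<in> prods G" "r = [NT B y']"
    | (tmc) w' where "TermProd A w' \<in> prods G" "r = map Tm w'"
    unfolding rule_def by auto
  then show ?case
  proof cases
    case bin
    have "(step G ^^ m) ([NT B y] @ [NT C y]) (map Tm w)" using r(2) bin by simp
    from pow_split[OF this] obtain v1 v2 n1 n2 where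
      s: "map Tm w = v1 @ v2" "m = n1+n2" "(step G ^^ n1) [NT B y] v1" "(step G ^^ n2) [NT C y] v2"
      by blast
    from s(1) obtain w1 w2 where ww: "w = w1@w2" "v1 = map Tm w1" "v2 = map Tm w2"
      by (metis map_eq_append_conv)
    have BL: "B \<in> Lset G y" using pow_L[OF wf] s ww less.prems by auto
    have CL: "C \<in> Lset G y" using pow_L[OF wf] s ww less.prems by auto
    have d1: "derives (annotate G) [NT (B, Lset G y) (annst G y)] (map Tm w1)"
      using less.IH[of n1 B y w1] s ww less.prems n by auto
    have d2: "derives (annotate G) [NT (C, Lset G y) (annst G y)] (map Tm w2)"
      using less.IH[of n2 C y w2] s ww less.prems n by auto
    have "BinProd (A, Lset G y) (B, Lset G y) (C, Lset G y) \<in> prods (annotate G)"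
      using bin(1) AL BL CL Lset_sub[of G y] unfolding annotate_def by auto
    then have "rule (annotate G) (NT (A, Lset G y) (annst G y))
       ([NT (B, Lset G y) (annst G y)] @ [NT (C, Lset G y) (annst G y)])"
      unfolding rule_def by auto
    then have "step (annotate G) [NT (A, Lset G y) (annst G y)]
       ([NT (B, Lset G y) (annst G y)] @ [NT (C, Lset G y) (annst G y)])" by (rule rule_step)
    moreover have "derives (annotate G) ([NT (B, Lset G y) (annst G y)] @ [NT (C, Lset G y) (annst G y)])
      (map Tm w1 @ map Tm w2)" using d1 d2 by (rule derives_app)
    ultimately show ?thesis using ww by (auto intro: derives_step)
  next
    case push
    have BL: "B \<in> Lset G (f # y)" using pow_L[OF wf] r(2) push less.prems by auto
    have d: "derives (annotate G) [NT (B, Lset G (f # y)) (annst G (f # y))] (map Tm w)"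
      using less.IH[of m B "f # y" w] r push less.prems n by auto
    have "PushProd (A, Lset G y) (B, dot G [f] (Lset G y)) (f, Lset G y) \<in> prods (annotate G)"
      using push(1) AL BL Lset_sub[of G y] L_dot[OF wf] unfolding annotate_def by auto
    then have "rule (annotate G) (NT (A, Lset G y) (annst G y))
       [NT (B, Lset G (f # y)) (annst G (f # y))]"
      using L_dot[OF wf] unfolding rule_def by auto
    then have "step (annotate G) [NT (A, Lset G y) (annst G y)]
       [NT (B, Lset G (f # y)) (annst G (f # y))]" by (rule rule_step)
    then show ?thesis using d by (rule derives_step)
  next
    case pop
    have BL: "B \<in> Lset G y'" using pow_L[OF wf] r(2) pop less.prems by auto
    have d: "derives (annotate G) [NT (B, Lset G y') (annst G y')] (map Tm w)"
      using less.IH[of m B y' w] r pop less.prems n by auto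
    have AL': "A \<in> dot G [f] (Lset G y')" using AL pop(1) L_dot[OF wf] by auto
    have "PopProd (A, dot G [f] (Lset G y')) (f, Lset G y') (B, Lset G y') \<in> prods (annotate G)"
      using pop(2) AL' BL Lset_sub[of G y'] unfolding annotate_def by auto
    then have "rule (annotate G) (NT (A, Lset G y) (annst G y))
       [NT (B, Lset G y') (annst G y')]"
      using L_dot[OF wf] pop(1) unfolding rule_def by auto
    then have "step (annotate G) [NT (A, Lset G y) (annst G y)]
       [NT (B, Lset G y') (annst G y')]" by (rule rule_step)
    then show ?thesis using d by (rule derives_step)
  next
    case tmc
    have "(step G ^^ m) (map Tm w') (map Tm w)" using r(2) tmc(2) by simp
    from term_pow[OF this] have "w = w'" by (simp add: inj_map_eq_map inj_def)
    have "TermProd (A, Lset G y) w' \<in> prods (annotate G)"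
      using tmc(1) AL Lset_sub[of G y] unfolding annotate_def by auto
    then have "rule (annotate G) (NT (A, Lset G y) (annst G y)) (map Tm w')"
      unfolding rule_def by auto
    then have "step (annotate G) [NT (A, Lset G y) (annst G y)] (map Tm w')" by (rule rule_step)
    then show ?thesis using \<open>w = w'\<close> unfolding derives_def by auto
  qed
qed

definition proj :: "('n \<times> 'n set, 't, 'i \<times> 'n set) sym \<Rightarrow> ('n, 't, 'i) sym" where
  "proj a = (case a of NT P zs \<Rightarrow> NT (fst P) (map fst zs) | Tm t \<Rightarrow> Tm t)"

lemma rule_proj: "rule (annotate G) a r \<Longrightarrow> rule G (proj a) (map proj r)"
  unfolding rule_def proj_def annotate_def by (auto simp: comp_def)

lemma step_proj: "step (annotate G) u v \<Longrightarrow> step G (map proj u) (map proj v)"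
proof -
  assume "step (annotate G) u v"
  then obtain u1 u2 a r where h: "u = u1 @ [a] @ u2" "v = u1 @ r @ u2" "rule (annotate G) a r"
    unfolding step_rule by blast
  have "map proj u = map proj u1 @ [proj a] @ map proj u2"
    "map proj v = map proj u1 @ map proj r @ map proj u2"
    using h by auto
  moreover have "rule G (proj a) (map proj r)" using h(3) by (rule rule_proj)
  ultimately show ?thesis unfolding step_rule by blast
qed

lemma derives_proj: "derives (annotate G) u v \<Longrightarrow> derives G (map proj u) (map proj v)"
  unfolding derives_def
  by (induction rule: rtranclp_induct) (auto intro: rtranclp.rtrancl_into_rtrancl step_proj)

theorem lemma4p2:
  fixes G :: "('n, 't, 'i) igrammar"
  assumes "wf_igrammar G"
    and "start G \<in> Useful G"
  shows "lang (annotate G) = lang G \<and>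
         (\<forall>u. derives (annotate G) [NT (start (annotate G)) []] u \<longrightarrow>
              (\<exists>w. set w \<subseteq> tms (annotate G) \<and> derives (annotate G) u (map Tm w)))"
proof -
  note wf = assms(1)
  have LU: "Lset G [] = Useful G" by (simp add: Lset_def Useful_def)
  have st: "start (annotate G) = (start G, Useful G)" "tms (annotate G) = tms G"
    by (simp_all add: annotate_def)
  have l1: "lang (annotate G) \<subseteq> lang G"
  proof
    fix w assume "w \<in> lang (annotate G)"
    then have "set w \<subseteq> tms G" "derives (annotate G) [NT (start G, Useful G) []] (map Tm w)"
      unfolding lang_def st by auto
    then show "w \<in> lang G" using derives_proj unfolding lang_def
      by (fastforce simp: proj_def comp_def)
  qed
  have l2: "lang G \<subseteq> lang (annotate G)"
  proof
    fix w assume "w \<in> lang G"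
    then have w: "set w \<subseteq> tms G" "derives G [NT (start G) []] (map Tm w)"
      unfolding lang_def by auto
    then obtain n where "(step G ^^ n) [NT (start G) []] (map Tm w)"
      unfolding derives_def rtranclp_power by auto
    from lift[OF wf this w(1)] show "w \<in> lang (annotate G)"
      using w(1) unfolding lang_def st LU by simp
  qed
  have "\<forall>u. derives (annotate G) [NT (start (annotate G)) []] u \<longrightarrow>
              (\<exists>w. set w \<subseteq> tms (annotate G) \<and> derives (annotate G) u (map Tm w))"
  proof (intro allI impI)
    fix u assume d: "derives (annotate G) [NT (start (annotate G)) []] u"
    have "good G (NT (start G, Lset G []) (annst G []))"
      using assms(2) LU unfolding good_def by auto
    then have "\<forall>a\<in>set [NT (start (annotate G)) []]. good G a" using st LU by simp
    from good_derives[OF wf d this] have gu: "\<forall>a\<in>set u. good G a" .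
    have "\<forall>a\<in>set u. \<exists>w. set w \<subseteq> tms G \<and> derives (annotate G) [a] (map Tm w)"
    proof
      fix a assume "a \<in> set u"
      then have "good G a" using gu by blast
      then consider (n) A y where "a = NT (A, Lset G y) (annst G y)" "A \<in> Lset G y"
        | (t) t where "a = Tm t" "t \<in> tms G"
        unfolding good_def by blast
      then show "\<exists>w. set w \<subseteq> tms G \<and> derives (annotate G) [a] (map Tm w)"
      proof cases
        case n
        then obtain w where w: "set w \<subseteq> tms G" "derives G [NT A y] (map Tm w)"
          unfolding Lset_def by auto
        then obtain k where "(step G ^^ k) [NT A y] (map Tm w)"
          unfolding derives_def rtranclp_power by auto
        from lift[OF wf this w(1)] show ?thesis using n w(1) by blast
      next
        case t then show ?thesis unfolding derives_def
          by (intro exI[of _ "[t]"]) auto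
      qed
    qed
    from derives_concat[OF this] show "\<exists>w. set w \<subseteq> tms (annotate G) \<and> derives (annotate G) u (map Tm w)"
      using st by simp
  qed
  then show ?thesis using l1 l2 by blast
qed

end
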